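(* Let $a,x,y\in(0,1)$ with $ay<x$, and let $W_{(\alpha,\beta)}(a,x,y)=(T_1,T_2)$ be the 2-variable weighted shift defined below. Then the operator matrix $L=\begin{pmatrix} T_1^*T_1 & T_2^*T_1\\ T_1^*T_2 & T_2^*T_2\end{pmatrix}$ is positive.
   Context: A 2-variable weighted shift $(T_1,T_2)$ on $\ell^2(\mathbb{Z}_+^2)$ (orthonormal basis $\{e_{\mathbf{k}}\}$) is given by $T_1e_{\mathbf{k}}=\alpha_{\mathbf{k}}e_{\mathbf{k}+(1,0)}$, $T_2e_{\mathbf{k}}=\beta_{\mathbf{k}}e_{\mathbf{k}+(0,1)}$. $W_{(\alpha,\beta)}(a,x,y)$ is the one with $\alpha_{(0,0)}=x$, $\alpha_{(0,k_2)}=a$ for $k_2\ge1$, $\alpha_{(k_1,k_2)}=1$ for $k_1\ge1$; $\beta_{(0,0)}=y$, $\beta_{(k_1,0)}=ay/x$ for $k_1\ge1$, $\beta_{(k_1,k_2)}=1$ for $k_2\ge1$. $L$ acts on $\ell^2(\mathbb{Z}_+^2)\oplus\ell^2(\mathbb{Z}_+^2)$. *)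

theory Defs
  imports "HOL-Analysis.Analysis"
begin

text \<open>Vectors of \<open>\<ell>\<^sup>2(\<int>\<^sub>+\<^sup>2)\<close> are represented as functions
  \<open>nat \<times> nat \<Rightarrow> complex\<close>; \<open>f\<close> corresponds to \<open>\<Sum> f k e_k\<close>.\<close>

definition is_l2 :: "(nat \<times> nat \<Rightarrow> complex) \<Rightarrow> bool" where
  "is_l2 f \<longleftrightarrow> (\<lambda>k. (cmod (f k))\<^sup>2) summable_on UNIV"

definition l2_inner :: "(nat \<times> nat \<Rightarrow> complex) \<Rightarrow> (nat \<times> nat \<Rightarrow> complex) \<Rightarrow> complex" where
  "l2_inner u v = (\<Sum>\<^sub>\<infinity>k. u k * cnj (v k))"

fun wa :: "real \<Rightarrow> real \<Rightarrow> real \<Rightarrow> nat \<times> nat \<Rightarrow> real" where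
  "wa a x y (k1, k2) =
     (if k1 = 0 then (if k2 = 0 then x else a) else 1)"

fun wb :: "real \<Rightarrow> real \<Rightarrow> real \<Rightarrow> nat \<times> nat \<Rightarrow> real" where
  "wb a x y (k1, k2) =
     (if k2 = 0 then (if k1 = 0 then y else a * y / x) else 1)"

text \<open>Weighted shift \<open>T e_k = w_k e_(k+\<delta>)\<close> in direction \<open>\<delta>\<close> and its adjoint
  \<open>T\<^sup>* e_(k+\<delta>) = conj(w_k) e_k\<close>, \<open>T\<^sup>* e_k = 0\<close> otherwise.\<close>

fun T1 :: "real \<Rightarrow> real \<Rightarrow> real \<Rightarrow> (nat \<times> nat \<Rightarrow> complex) \<Rightarrow> nat \<times> nat \<Rightarrow> complex" where
  "T1 a x y f (k1, k2) =
     (if k1 = 0 then 0 else complex_of_real (wa a x y (k1 - 1, k2)) * f (k1 - 1, k2))"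

fun T2 :: "real \<Rightarrow> real \<Rightarrow> real \<Rightarrow> (nat \<times> nat \<Rightarrow> complex) \<Rightarrow> nat \<times> nat \<Rightarrow> complex" where
  "T2 a x y f (k1, k2) =
     (if k2 = 0 then 0 else complex_of_real (wb a x y (k1, k2 - 1)) * f (k1, k2 - 1))"

fun T1adj :: "real \<Rightarrow> real \<Rightarrow> real \<Rightarrow> (nat \<times> nat \<Rightarrow> complex) \<Rightarrow> nat \<times> nat \<Rightarrow> complex" where
  "T1adj a x y f (k1, k2) = cnj (complex_of_real (wa a x y (k1, k2))) * f (k1 + 1, k2)"

fun T2adj :: "real \<Rightarrow> real \<Rightarrow> real \<Rightarrow> (nat \<times> nat \<Rightarrow> complex) \<Rightarrow> nat \<times> nat \<Rightarrow> complex" where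
  "T2adj a x y f (k1, k2) = cnj (complex_of_real (wb a x y (k1, k2))) * f (k1, k2 + 1)"

definition Lop :: "real \<Rightarrow> real \<Rightarrow> real \<Rightarrow>
    (nat \<times> nat \<Rightarrow> complex) \<times> (nat \<times> nat \<Rightarrow> complex) \<Rightarrow>
    (nat \<times> nat \<Rightarrow> complex) \<times> (nat \<times> nat \<Rightarrow> complex)" where
  "Lop a x y h =
     (let f = fst h; g = snd h in
      (\<lambda>k. T1adj a x y (T1 a x y f) k + T2adj a x y (T1 a x y g) k,
       \<lambda>k. T1adj a x y (T2 a x y f) k + T2adj a x y (T2 a x y g) k))"

definition L_positive :: "real \<Rightarrow> real \<Rightarrow> real \<Rightarrow> bool" where
  "L_positive a x y \<longleftrightarrow>
     (\<forall>f g. is_l2 f \<and> is_l2 g \<longrightarrow>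
        (let z = l2_inner (fst (Lop a x y (f, g))) f + l2_inner (snd (Lop a x y (f, g))) g
         in Im z = 0 \<and> Re z \<ge> 0))"

end

theory Submission
  imports Defs
begin

lemma has_sum_from_range:
  fixes phi :: "nat \<times> nat \<Rightarrow> complex"
  assumes "inj h" "\<And>k. k \<notin> range h \<Longrightarrow> phi k = 0" "((phi \<circ> h) has_sum X) UNIV"
  shows "(phi has_sum X) UNIV"
proof -
  have "(phi has_sum X) (range h)" using has_sum_reindex[of h UNIV phi X] assms(1,3) by simp
  then show ?thesis by (subst has_sum_cong_neutral[where T="range h"]) (use assms(2) in auto)
qed

lemma wa_bnd:
  assumes "0 < a" "a < 1" "0 < x" "x < 1"
  shows "0 \<le> wa a x y k \<and> wa a x y k \<le> 1"
  using assms by (cases k) auto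

lemma wb_bnd:
  assumes "0 < a" "a < 1" "0 < x" "0 < y" "y < 1" "a * y < x"
  shows "0 \<le> wb a x y k \<and> wb a x y k \<le> 1"
proof (cases k)
  case (Pair k1 k2)
  have "a * y / x \<le> 1" using assms by (simp add: divide_le_eq)
  moreover have "0 \<le> a * y / x" using assms by simp
  ultimately show ?thesis using assms Pair by auto
qed

lemma normsq: "z * cnj z = complex_of_real ((cmod z)\<^sup>2)"
  by (metis complex_norm_square of_real_power)

lemma amgm: "(p::real)*q \<le> (q^2 + p^2)/2"
proof -
  have "0 \<le> (p - q)^2" by simp
  then show ?thesis by (simp add: power2_diff field_simps)
qed

theorem lemma3p14:
  fixes a x y :: real
  assumes "0 < a" "a < 1" "0 < x" "x < 1" "0 < y" "y < 1" "a * y < x"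
  shows "L_positive a x y"
  unfolding L_positive_def
proof (intro allI impI)
  fix f g :: "nat \<times> nat \<Rightarrow> complex"
  assume fg: "is_l2 f \<and> is_l2 g"
  define al where "al = wa a x y"
  define be where "be = wb a x y"
  define F where "F k = (cmod (f k))\<^sup>2" for k
  define G where "G k = (cmod (g k))\<^sup>2" for k
  define i :: "nat \<times> nat \<Rightarrow> nat \<times> nat" where "i = (\<lambda>(m, n). (Suc m, n))"
  define j :: "nat \<times> nat \<Rightarrow> nat \<times> nat" where "j = (\<lambda>(m, n). (m, Suc n))"
  define w where "w mn = be (i mn) * al (j mn)" for mn
  define P where "P mn = complex_of_real (w mn) * g (j mn) * cnj (f (i mn))" for mn
  have alb: "0 \<le> al k \<and> al k \<le> 1" for k unfolding al_def using wa_bnd assms by blast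
  have beb: "0 \<le> be k \<and> be k \<le> 1" for k unfolding be_def using wb_bnd assms by blast
  have wb: "0 \<le> w k \<and> w k \<le> 1" for k unfolding w_def using alb beb
    by (meson mult_le_one mult_nonneg_nonneg)
  have Fs: "F summable_on UNIV" using fg unfolding is_l2_def F_def by simp
  have Gs: "G summable_on UNIV" using fg unfolding is_l2_def G_def by simp
  have Fnn: "F k \<ge> 0" for k unfolding F_def by simp
  have Gnn: "G k \<ge> 0" for k unfolding G_def by simp
  have injII: "inj i" unfolding i_def inj_def by auto
  have injJ: "inj j" unfolding j_def inj_def by auto
  have rI: "k \<notin> range i \<longleftrightarrow> fst k = 0" for k
    unfolding i_def by (cases k; cases "fst k") (auto simp: image_iff)
  have rJ: "k \<notin> range j \<longleftrightarrow> snd k = 0" for k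
    unfolding j_def by (cases k; cases "snd k") (auto simp: image_iff)
  have Fis: "(F \<circ> i) summable_on UNIV"
    using summable_on_reindex[OF injII, of F] summable_on_subset[OF Fs] by auto
  have Gjs: "(G \<circ> j) summable_on UNIV"
    using summable_on_reindex[OF injJ, of G] summable_on_subset[OF Gs] by auto
  have FGs: "(\<lambda>mn. F (i mn) + G (j mn)) summable_on UNIV"
    using summable_on_add[OF Fis Gjs] by (simp add: o_def)
  have Pbnd: "cmod (P mn) \<le> (F (i mn) + G (j mn)) / 2" for mn
  proof -
    have "cmod (P mn) = w mn * cmod (g (j mn)) * cmod (f (i mn))"
      unfolding P_def using wb[of mn] by (simp add: norm_mult)
    also have "\<dots> \<le> cmod (g (j mn)) * cmod (f (i mn))"
      using wb[of mn] by (simp add: mult_left_le_one_le mult.assoc)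
    also have "\<dots> \<le> (F (i mn) + G (j mn)) / 2"
      using amgm[of "cmod (g (j mn))" "cmod (f (i mn))"] unfolding F_def G_def by (simp add: add.commute)
    finally show ?thesis .
  qed
  have Ps: "P summable_on UNIV"
  proof -
    have "(\<lambda>mn. norm (P mn)) summable_on UNIV"
    proof (rule summable_on_comparison_test[OF FGs])
      fix mn :: "nat \<times> nat"
      show "norm (P mn) \<le> F (i mn) + G (j mn)" using Pbnd[of mn] Fnn[of "i mn"] Gnn[of "j mn"] by simp
      show "0 \<le> norm (P mn)" by simp
    qed
    then show ?thesis using summable_on_iff_abs_summable_on_complex by blast
  qed
  define X where "X = infsum P UNIV"
  define A1 where "A1 = infsum (\<lambda>k. (al k)\<^sup>2 * F k) UNIV"
  define A4 where "A4 = infsum (\<lambda>k. (be k)\<^sup>2 * G k) UNIV"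
  have A1s: "(\<lambda>k. (al k)\<^sup>2 * F k) summable_on UNIV"
    by (rule summable_on_comparison_test[OF Fs])
      (use alb Fnn in \<open>auto simp: mult_left_le_one_le power_le_one\<close>)
  have A4s: "(\<lambda>k. (be k)\<^sup>2 * G k) summable_on UNIV"
    by (rule summable_on_comparison_test[OF Gs])
      (use beb Gnn in \<open>auto simp: mult_left_le_one_le power_le_one\<close>)
  have h1: "((\<lambda>k. T1adj a x y (T1 a x y f) k * cnj (f k)) has_sum complex_of_real A1) UNIV"
  proof -
    have "((\<lambda>k. complex_of_real ((al k)\<^sup>2 * F k)) has_sum complex_of_real A1) UNIV"
      using has_sum_of_real[OF A1s[unfolded summable_iff_has_sum_infsum]] A1_def by simp
    moreover have "T1adj a x y (T1 a x y f) k * cnj (f k) = complex_of_real ((al k)\<^sup>2 * F k)" for k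
    proof -
      have "T1adj a x y (T1 a x y f) k * cnj (f k) = complex_of_real ((al k)\<^sup>2) * (f k * cnj (f k))"
        by (cases k) (simp add: al_def power2_eq_square del: wa.simps)
      also have "\<dots> = complex_of_real ((al k)\<^sup>2 * F k)" by (simp only: normsq F_def of_real_mult)
      finally show ?thesis .
    qed
    ultimately show ?thesis by simp
  qed
  have h4: "((\<lambda>k. T2adj a x y (T2 a x y g) k * cnj (g k)) has_sum complex_of_real A4) UNIV"
  proof -
    have "((\<lambda>k. complex_of_real ((be k)\<^sup>2 * G k)) has_sum complex_of_real A4) UNIV"
      using has_sum_of_real[OF A4s[unfolded summable_iff_has_sum_infsum]] A4_def by simp
    moreover have "T2adj a x y (T2 a x y g) k * cnj (g k) = complex_of_real ((be k)\<^sup>2 * G k)" for k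
    proof -
      have "T2adj a x y (T2 a x y g) k * cnj (g k) = complex_of_real ((be k)\<^sup>2) * (g k * cnj (g k))"
        by (cases k) (simp add: be_def power2_eq_square del: wb.simps)
      also have "\<dots> = complex_of_real ((be k)\<^sup>2 * G k)" by (simp only: normsq G_def of_real_mult)
      finally show ?thesis .
    qed
    ultimately show ?thesis by simp
  qed
  have h2: "((\<lambda>k. T2adj a x y (T1 a x y g) k * cnj (f k)) has_sum X) UNIV"
  proof (rule has_sum_from_range[OF injII])
    show "T2adj a x y (T1 a x y g) k * cnj (f k) = 0" if "k \<notin> range i" for k
      using that rI[of k] by (cases k) auto
    have "(\<lambda>k. T2adj a x y (T1 a x y g) k * cnj (f k)) \<circ> i = P"
      by (auto simp: P_def i_def j_def w_def al_def be_def fun_eq_iff)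
    then show "(((\<lambda>k. T2adj a x y (T1 a x y g) k * cnj (f k)) \<circ> i) has_sum X) UNIV"
      using Ps X_def by simp
  qed
  have h3: "((\<lambda>k. T1adj a x y (T2 a x y f) k * cnj (g k)) has_sum cnj X) UNIV"
  proof (rule has_sum_from_range[OF injJ])
    show "T1adj a x y (T2 a x y f) k * cnj (g k) = 0" if "k \<notin> range j" for k
      using that rJ[of k] by (cases k) auto
    have "(\<lambda>k. T1adj a x y (T2 a x y f) k * cnj (g k)) \<circ> j = (\<lambda>mn. cnj (P mn))"
      by (auto simp: P_def i_def j_def w_def al_def be_def fun_eq_iff)
    then show "(((\<lambda>k. T1adj a x y (T2 a x y f) k * cnj (g k)) \<circ> j) has_sum cnj X) UNIV"
      using Ps X_def by simp
  qed
  have e1: "l2_inner (fst (Lop a x y (f, g))) f = complex_of_real A1 + X"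
    unfolding l2_inner_def Lop_def Let_def fst_conv
    by (rule infsumI) (use has_sum_add[OF h1 h2] in \<open>simp add: distrib_right\<close>)
  have e2: "l2_inner (snd (Lop a x y (f, g))) g = cnj X + complex_of_real A4"
    unfolding l2_inner_def Lop_def Let_def snd_conv
    by (rule infsumI) (use has_sum_add[OF h3 h4] in \<open>simp add: distrib_right\<close>)
  have ReX: "Re X = infsum (\<lambda>mn. Re (P mn)) UNIV"
    unfolding X_def using infsum_Re[OF Ps] by simp
  have Res: "(\<lambda>mn. Re (P mn)) summable_on UNIV"
    using summable_on_Re[OF Ps] by simp
  have A1ge: "infsum (F \<circ> i) UNIV \<le> A1"
  proof -
    have "infsum (F \<circ> i) UNIV = infsum (\<lambda>k. (al k)\<^sup>2 * F k) (range i)"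
      using infsum_reindex[OF injII, of "\<lambda>k. (al k)\<^sup>2 * F k"]
      by (simp add: o_def i_def al_def split_def)
    also have "\<dots> \<le> A1" unfolding A1_def
      by (rule infsum_mono_neutral)
        (use A1s summable_on_subset[OF A1s] Fnn in auto)
    finally show ?thesis .
  qed
  have A4ge: "infsum (G \<circ> j) UNIV \<le> A4"
  proof -
    have "infsum (G \<circ> j) UNIV = infsum (\<lambda>k. (be k)\<^sup>2 * G k) (range j)"
      using infsum_reindex[OF injJ, of "\<lambda>k. (be k)\<^sup>2 * G k"]
      by (simp add: o_def j_def be_def split_def)
    also have "\<dots> \<le> A4" unfolding A4_def
      by (rule infsum_mono_neutral)
        (use A4s summable_on_subset[OF A4s] Gnn in auto)
    finally show ?thesis .
  qed
  have key: "0 \<le> infsum (F \<circ> i) UNIV + infsum (G \<circ> j) UNIV + 2 * infsum (\<lambda>mn. Re (P mn)) UNIV"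
  proof -
    have "infsum (F \<circ> i) UNIV + infsum (G \<circ> j) UNIV + 2 * infsum (\<lambda>mn. Re (P mn)) UNIV
        = infsum (\<lambda>mn. (F \<circ> i) mn + (G \<circ> j) mn + 2 * Re (P mn)) UNIV"
      using infsum_add[OF summable_on_add[OF Fis Gjs] summable_on_cmult_right[OF Res, of 2]]
        infsum_add[OF Fis Gjs] infsum_cmult_right[OF Res, of 2] by simp
    also have "\<dots> \<ge> 0"
    proof (rule infsum_nonneg)
      fix mn :: "nat \<times> nat"
      have "\<bar>Re (P mn)\<bar> \<le> cmod (P mn)" by (rule abs_Re_le_cmod)
      then show "0 \<le> (F \<circ> i) mn + (G \<circ> j) mn + 2 * Re (P mn)"
        using Pbnd[of mn] by simp
    qed
    finally show ?thesis .
  qed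
  have z: "l2_inner (fst (Lop a x y (f, g))) f + l2_inner (snd (Lop a x y (f, g))) g
      = complex_of_real (A1 + A4 + 2 * Re X)"
    unfolding e1 e2 by (simp add: complex_eq_iff)
  show "let z = l2_inner (fst (Lop a x y (f, g))) f + l2_inner (snd (Lop a x y (f, g))) g
        in Im z = 0 \<and> 0 \<le> Re z"
    unfolding z Let_def using key A1ge A4ge ReX by simp
qed

end
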